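(* Let $G$ be a finite, simple, undirected, connected graph whose vertex set $V(G)$ is a set of integers. Then there exists an elimination tree $T$ of $G$ whose depth equals the treedepth of $G$ and which has the following property: for every vertex $w \in V(G)$ and every vertex $v \in V(G)$ that dominates $w$ in $G$, the vertex $w$ is not an ancestor of $v$ in $T$.
   Context: For a vertex $x$ of $G$, $N(x)$ denotes the set of neighbours of $x$ in $G$. A treedepth decomposition of $G$ is a rooted forest $F$ on vertex set $V(G)$ such that for every edge $\{u,v\}$ of $G$, either $u$ is an ancestor of $v$ or $v$ is an ancestor of $u$ in $F$. The depth of a rooted forest is the maximum number of vertices on a root-to-leaf path. The treedepth of $G$ is the minimum depth of a treedepth decomposition of $G$. An elimination tree of a connected graph $G$ is defined recursively: if $G$ has a single vertex, its elimination tree is $G$ itself (a single root); otherwise, choose a vertex $v$ of $G$, let $F$ be a forest consisting of one elimination tree for each connected component of $G - v$, and form a rooted tree by making $v$ the parent of every root of $F$. Given distinct vertices $v, w \in V(G)$ (adjacent or not), $v$ dominates $w$ in $G$ if either (1) $N(v) \setminus \{w\}$ is a proper superset of $N(w) \setminus \{v\}$, or (2) $N(v) \setminus \{w\} = N(w) \setminus \{v\}$ and $v > w$ (comparison as integers). *)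

theory Defs
  imports Main
begin

definition simple_graph :: "int set \<Rightarrow> (int \<Rightarrow> int \<Rightarrow> bool) \<Rightarrow> bool" where
  "simple_graph V E \<longleftrightarrow> finite V \<and> (\<forall>x y. E x y \<longrightarrow> x \<in> V \<and> y \<in> V)
     \<and> (\<forall>x y. E x y \<longrightarrow> E y x) \<and> (\<forall>x. \<not> E x x)"

definition induced_edges :: "(int \<Rightarrow> int \<Rightarrow> bool) \<Rightarrow> int set \<Rightarrow> (int \<times> int) set" where
  "induced_edges E S = {(a, b). a \<in> S \<and> b \<in> S \<and> E a b}"

definition connected_on :: "(int \<Rightarrow> int \<Rightarrow> bool) \<Rightarrow> int set \<Rightarrow> bool" where
  "connected_on E S \<longleftrightarrow> S \<noteq> {} \<and> (\<forall>x\<in>S. \<forall>y\<in>S. (x, y) \<in> (induced_edges E S)\<^sup>*)"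

definition components :: "(int \<Rightarrow> int \<Rightarrow> bool) \<Rightarrow> int set \<Rightarrow> int set set" where
  "components E S = {{y \<in> S. (x, y) \<in> (induced_edges E S)\<^sup>*} | x. x \<in> S}"

definition nbhd :: "int set \<Rightarrow> (int \<Rightarrow> int \<Rightarrow> bool) \<Rightarrow> int \<Rightarrow> int set" where
  "nbhd V E x = {y \<in> V. E x y}"

definition dominates :: "int set \<Rightarrow> (int \<Rightarrow> int \<Rightarrow> bool) \<Rightarrow> int \<Rightarrow> int \<Rightarrow> bool" where
  "dominates V E v w \<longleftrightarrow> v \<noteq> w \<and>
     (nbhd V E v - {w} \<supset> nbhd V E w - {v} \<or>
      (nbhd V E v - {w} = nbhd V E w - {v} \<and> v > w))"

text \<open>Rooted forests on V are represented by a child-to-parent relation P: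
every vertex has at most one parent, and there are no cycles.\<close>
definition rooted_forest :: "int set \<Rightarrow> (int \<times> int) set \<Rightarrow> bool" where
  "rooted_forest V P \<longleftrightarrow> P \<subseteq> V \<times> V \<and> single_valued P \<and> (\<forall>x. (x, x) \<notin> P\<^sup>+)"

definition anc :: "(int \<times> int) set \<Rightarrow> int \<Rightarrow> int \<Rightarrow> bool" where
  "anc P a d \<longleftrightarrow> (d, a) \<in> P\<^sup>+"

text \<open>Depth: maximum number of vertices on a root-to-leaf path, i.e. the maximum over
vertices x of the number of vertices on the path from x to its root.\<close>
definition forest_depth :: "int set \<Rightarrow> (int \<times> int) set \<Rightarrow> nat" where
  "forest_depth V P = Max ((\<lambda>x. card {y. (x, y) \<in> P\<^sup>*}) ` V)"

definition td_decomposition :: "int set \<Rightarrow> (int \<Rightarrow> int \<Rightarrow> bool) \<Rightarrow> (int \<times> int) set \<Rightarrow> bool" where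
  "td_decomposition V E P \<longleftrightarrow> rooted_forest V P \<and>
     (\<forall>u v. E u v \<longrightarrow> anc P u v \<or> anc P v u)"

definition treedepth :: "int set \<Rightarrow> (int \<Rightarrow> int \<Rightarrow> bool) \<Rightarrow> nat" where
  "treedepth V E = (LEAST k. \<exists>P. td_decomposition V E P \<and> forest_depth V P = k)"

inductive elim_tree :: "(int \<Rightarrow> int \<Rightarrow> bool) \<Rightarrow> int set \<Rightarrow> int \<Rightarrow> (int \<times> int) set \<Rightarrow> bool"
  for E where
  single: "elim_tree E {v} v {}"
| step: "\<lbrakk> v \<in> S; S \<noteq> {v};
           \<forall>C \<in> components E (S - {v}). elim_tree E C (rt C) (Q C);
           P = (\<Union>C \<in> components E (S - {v}). insert (rt C, v) (Q C)) \<rbrakk>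
         \<Longrightarrow> elim_tree E S v P"

end

theory Submission
  imports Defs
begin

lemma ie_sym:
  assumes sym: "\<forall>x y. E x y \<longrightarrow> E y x"
  shows "(x, y) \<in> (induced_edges E S)\<^sup>* \<Longrightarrow> (y, x) \<in> (induced_edges E S)\<^sup>*"
proof -
  have "(induced_edges E S)\<inverse> = induced_edges E S"
    using sym unfolding induced_edges_def by auto
  moreover assume "(x, y) \<in> (induced_edges E S)\<^sup>*"
  ultimately show ?thesis
    by (metis converse_iff rtrancl_converseI)
qed

lemma ie_rt_in:
  "(x, y) \<in> (induced_edges E S)\<^sup>* \<Longrightarrow> x \<in> S \<Longrightarrow> y \<in> S"
  by (induction rule: rtrancl_induct) (auto simp: induced_edges_def)

lemma comp_sub: "C \<in> components E S \<Longrightarrow> C \<subseteq> S"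
  unfolding components_def by auto

lemma comp_ne: "C \<in> components E S \<Longrightarrow> C \<noteq> {}"
  unfolding components_def by auto

lemma comp_eq:
  assumes sym: "\<forall>x y. E x y \<longrightarrow> E y x"
    and "C \<in> components E S" "x \<in> C"
  shows "C = {y \<in> S. (x, y) \<in> (induced_edges E S)\<^sup>*}"
proof -
  obtain z where z: "z \<in> S" "C = {y \<in> S. (z, y) \<in> (induced_edges E S)\<^sup>*}"
    using assms(2) unfolding components_def by auto
  then have zx: "(z, x) \<in> (induced_edges E S)\<^sup>*" using assms(3) by auto
  then have xz: "(x, z) \<in> (induced_edges E S)\<^sup>*" using ie_sym[OF sym] by blast
  show ?thesis using z zx xz by (auto intro: rtrancl_trans)
qed

lemma comp_disj:
  assumes sym: "\<forall>x y. E x y \<longrightarrow> E y x"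
    and "C \<in> components E S" "C' \<in> components E S" "x \<in> C" "x \<in> C'"
  shows "C = C'"
  using comp_eq[OF sym assms(2,4)] comp_eq[OF sym assms(3,5)] by simp

lemma comp_ex: "x \<in> S \<Longrightarrow> \<exists>C\<in>components E S. x \<in> C"
  unfolding components_def by auto

lemma comp_edge:
  assumes sym: "\<forall>x y. E x y \<longrightarrow> E y x"
    and "C \<in> components E S" "a \<in> C" "b \<in> S" "E a b"
  shows "b \<in> C"
proof -
  have "(a, b) \<in> induced_edges E S" using assms comp_sub[OF assms(2)]
    unfolding induced_edges_def by auto
  then show ?thesis using comp_eq[OF sym assms(2,3)] assms(4)
    by auto
qed

lemma comp_conn:
  assumes sym: "\<forall>x y. E x y \<longrightarrow> E y x"
    and "C \<in> components E S"
  shows "connected_on E C"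
proof -
  obtain x where x: "x \<in> C" using comp_ne[OF assms(2)] by auto
  have C: "C = {y \<in> S. (x, y) \<in> (induced_edges E S)\<^sup>*}" using comp_eq[OF sym assms(2) x] .
  have reach: "(x, y) \<in> (induced_edges E C)\<^sup>*" if "(x, y) \<in> (induced_edges E S)\<^sup>*" for y
    using that
  proof (induction rule: rtrancl_induct)
    case base then show ?case by simp
  next
    case (step y z)
    then have "y \<in> C" "z \<in> C" using C x comp_sub[OF assms(2)]
      by (auto simp: induced_edges_def intro: rtrancl_into_rtrancl)
    then have "(y, z) \<in> induced_edges E C" using step(2) by (auto simp: induced_edges_def)
    then show ?case using step(3) by (rule rtrancl_into_rtrancl[rotated])
  qed
  have "(a, b) \<in> (induced_edges E C)\<^sup>*" if "a \<in> C" "b \<in> C" for a b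
  proof -
    have "(x, a) \<in> (induced_edges E C)\<^sup>*" "(x, b) \<in> (induced_edges E C)\<^sup>*"
      using reach that C by auto
    then show ?thesis using ie_sym[OF sym] by (blast intro: rtrancl_trans)
  qed
  then show ?thesis unfolding connected_on_def using x by auto
qed


definition einv :: "(int \<Rightarrow> int \<Rightarrow> bool) \<Rightarrow> int set \<Rightarrow> int \<Rightarrow> (int \<times> int) set \<Rightarrow> bool" where
  "einv E S r P \<longleftrightarrow> r \<in> S \<and> P \<subseteq> (S - {r}) \<times> S \<and> (\<forall>x\<in>S. (x, r) \<in> P\<^sup>*)
     \<and> single_valued P \<and> (\<forall>x. (x, x) \<notin> P\<^sup>+)
     \<and> (\<forall>a\<in>S. \<forall>b\<in>S. E a b \<longrightarrow> anc P a b \<or> anc P b a)"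

lemma rt_in: "(x, y) \<in> Q\<^sup>* \<Longrightarrow> Q \<subseteq> B \<times> A \<Longrightarrow> x \<in> A \<Longrightarrow> y \<in> A"
  by (induction rule: rtrancl_induct) auto

locale stepctx =
  fixes E :: "int \<Rightarrow> int \<Rightarrow> bool" and S :: "int set" and v :: int
    and rt :: "int set \<Rightarrow> int" and Q :: "int set \<Rightarrow> (int \<times> int) set"
    and P :: "(int \<times> int) set"
  assumes sym: "\<forall>x y. E x y \<longrightarrow> E y x"
    and vS: "v \<in> S"
    and inv: "\<forall>C \<in> components E (S - {v}). einv E C (rt C) (Q C)"
    and P_def: "P = (\<Union>C \<in> components E (S - {v}). insert (rt C, v) (Q C))"
begin

abbreviation "Cs \<equiv> components E (S - {v})"

lemma C_sub: "C \<in> Cs \<Longrightarrow> C \<subseteq> S - {v}"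
  by (rule comp_sub)

lemma Q_sub: "C \<in> Cs \<Longrightarrow> Q C \<subseteq> (C - {rt C}) \<times> C"
  using inv unfolding einv_def by auto

lemma rt_C: "C \<in> Cs \<Longrightarrow> rt C \<in> C"
  using inv unfolding einv_def by auto

lemma edge_in:
  assumes "C \<in> Cs" "x \<in> C" "(x, y) \<in> P"
  shows "(x, y) \<in> Q C \<or> (x = rt C \<and> y = v)"
proof -
  obtain C' where C': "C' \<in> Cs" "(x, y) \<in> insert (rt C', v) (Q C')"
    using assms(3) P_def by auto
  then have "x \<in> C'" using Q_sub[OF C'(1)] rt_C[OF C'(1)] by auto
  then have "C' = C" using comp_disj[OF sym C'(1) assms(1)] assms(2) by auto
  then show ?thesis using C' by auto
qed

lemma P_dom: "(x, y) \<in> P \<Longrightarrow> \<exists>C\<in>Cs. x \<in> C"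
  using P_def Q_sub rt_C by fastforce

lemma P_sub: "P \<subseteq> (S - {v}) \<times> S"
  using P_def Q_sub rt_C C_sub vS by fastforce

lemma v_nosucc: "(v, y) \<notin> P"
  using P_sub by auto

lemma QsubP: "C \<in> Cs \<Longrightarrow> Q C \<subseteq> P"
  using P_def by auto

lemma rtP: "C \<in> Cs \<Longrightarrow> (rt C, v) \<in> P"
  using P_def by auto

lemma reach:
  assumes "C \<in> Cs" "x \<in> C" "(x, y) \<in> P\<^sup>*"
  shows "(x, y) \<in> (Q C)\<^sup>* \<or> y = v"
  using assms(3)
proof (induction rule: rtrancl_induct)
  case base then show ?case by simp
next
  case (step y z)
  show ?case
  proof (cases "y = v")
    case True then show ?thesis using step(2) v_nosucc by simp
  next
    case False
    then have yQ: "(x, y) \<in> (Q C)\<^sup>*" using step(3) by simp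
    have "y \<in> C" using rt_in[OF yQ Q_sub[OF assms(1)] assms(2)] .
    then have "(y, z) \<in> Q C \<or> z = v" using edge_in[OF assms(1) _ step(2)] by blast
    then show ?thesis using yQ by auto
  qed
qed

lemma reach_set:
  assumes "C \<in> Cs" "x \<in> C"
  shows "{y. (x, y) \<in> P\<^sup>*} = insert v {y. (x, y) \<in> (Q C)\<^sup>*}"
    and "{y. (x, y) \<in> (Q C)\<^sup>*} \<subseteq> C"
proof -
  have "(x, rt C) \<in> (Q C)\<^sup>*" using inv assms unfolding einv_def by auto
  then have "(x, rt C) \<in> P\<^sup>*" using rtrancl_mono[OF QsubP[OF assms(1)]] by blast
  then have "(x, v) \<in> P\<^sup>*" using rtP[OF assms(1)] by (blast intro: rtrancl_into_rtrancl)
  moreover have "(Q C)\<^sup>* \<subseteq> P\<^sup>*" using rtrancl_mono[OF QsubP[OF assms(1)]] .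
  ultimately show "{y. (x, y) \<in> P\<^sup>*} = insert v {y. (x, y) \<in> (Q C)\<^sup>*}"
    using reach[OF assms] by blast
  show "{y. (x, y) \<in> (Q C)\<^sup>*} \<subseteq> C"
    using rt_in[OF _ Q_sub[OF assms(1)] assms(2)] by blast
qed

lemma v_reach: "{y. (v, y) \<in> P\<^sup>*} = {v}"
proof -
  have "(v, y) \<in> P\<^sup>* \<Longrightarrow> y = v" for y
    using v_nosucc by (metis converse_rtranclE)
  then show ?thesis by auto
qed

lemma einv_P:
  assumes irr: "\<forall>x. \<not> E x x"
  shows "einv E S v P"
proof -
  have top: "\<forall>x\<in>S. (x, v) \<in> P\<^sup>*"
  proof
    fix x assume "x \<in> S"
    show "(x, v) \<in> P\<^sup>*"
    proof (cases "x = v")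
      case False
      then obtain C where "C \<in> Cs" "x \<in> C" using comp_ex[of x "S - {v}"] \<open>x \<in> S\<close> by blast
      then show ?thesis using reach_set(1) by blast
    qed simp
  qed
  have sv: "single_valued P"
  proof (rule single_valuedI)
    fix x y z assume xy: "(x, y) \<in> P" and xz: "(x, z) \<in> P"
    obtain C where C: "C \<in> Cs" "x \<in> C" using P_dom[OF xy] by blast
    have svC: "single_valued (Q C)" using inv C(1) unfolding einv_def by auto
    have nrt: "(rt C, w) \<notin> Q C" for w using Q_sub[OF C(1)] by auto
    from edge_in[OF C xy] edge_in[OF C xz] show "y = z"
      using svC nrt by (metis single_valuedD)
  qed
  have acyc: "\<forall>x. (x, x) \<notin> P\<^sup>+"
  proof (intro allI notI)
    fix x assume "(x, x) \<in> P\<^sup>+"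
    then obtain y where xy: "(x, y) \<in> P" and yx: "(y, x) \<in> P\<^sup>*"
      by (meson tranclD)
    obtain C where C: "C \<in> Cs" "x \<in> C" using P_dom[OF xy] by blast
    have xv: "x \<noteq> v" using C C_sub by auto
    show False
    proof (cases "y = v")
      case True then show False using yx xv v_reach by auto
    next
      case False
      then have xyQ: "(x, y) \<in> Q C" using edge_in[OF C xy] by auto
      then have "y \<in> C" using Q_sub[OF C(1)] by auto
      then have "(y, x) \<in> (Q C)\<^sup>*" using reach[OF C(1) _ yx] xv by auto
      then have "(x, x) \<in> (Q C)\<^sup>+" using xyQ by auto
      then show False using inv C(1) unfolding einv_def by auto
    qed
  qed
  have edges: "\<forall>a\<in>S. \<forall>b\<in>S. E a b \<longrightarrow> anc P a b \<or> anc P b a"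
  proof (intro ballI impI)
    fix a b assume ab: "a \<in> S" "b \<in> S" "E a b"
    have ab': "a \<noteq> b" using ab irr by auto
    show "anc P a b \<or> anc P b a"
    proof (cases "a = v \<or> b = v")
      case True
      then show ?thesis using top ab ab' unfolding anc_def
        by (metis rtrancl_eq_or_trancl)
    next
      case False
      then obtain C where C: "C \<in> Cs" "a \<in> C" using comp_ex[of a "S - {v}"] ab by blast
      then have "b \<in> C" using comp_edge[OF sym C] ab False by auto
      then have "anc (Q C) a b \<or> anc (Q C) b a" using inv C ab unfolding einv_def by auto
      then show ?thesis using trancl_mono[OF _ QsubP[OF C(1)]] unfolding anc_def by blast
    qed
  qed
  show ?thesis unfolding einv_def using vS P_sub top sv acyc edges by auto
qed

lemma depth_le:
  assumes "finite S" "\<forall>C\<in>Cs. forest_depth C (Q C) \<le> k"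
  shows "forest_depth S P \<le> Suc k"
  unfolding forest_depth_def
proof (subst Max_le_iff)
  show "finite ((\<lambda>x. card {y. (x, y) \<in> P\<^sup>*}) ` S)" using assms(1) by simp
  show "(\<lambda>x. card {y. (x, y) \<in> P\<^sup>*}) ` S \<noteq> {}" using vS by auto
  show "\<forall>a\<in>(\<lambda>x. card {y. (x, y) \<in> P\<^sup>*}) ` S. a \<le> Suc k"
  proof
    fix a assume "a \<in> (\<lambda>x. card {y. (x, y) \<in> P\<^sup>*}) ` S"
    then obtain x where x: "x \<in> S" "a = card {y. (x, y) \<in> P\<^sup>*}" by auto
    show "a \<le> Suc k"
    proof (cases "x = v")
      case True then show ?thesis using x v_reach by simp
    next
      case False
      then obtain C where C: "C \<in> Cs" "x \<in> C" using comp_ex[of x "S - {v}"] x by blast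
      have fC: "finite C" using C_sub[OF C(1)] assms(1) finite_subset by blast
      have sub: "{y. (x, y) \<in> (Q C)\<^sup>*} \<subseteq> C" using reach_set(2)[OF C] .
      have "a = Suc (card {y. (x, y) \<in> (Q C)\<^sup>*})"
        using x reach_set(1)[OF C] sub C_sub[OF C(1)] finite_subset[OF sub fC]
        by (subst card_insert_disjoint[symmetric]) auto
      moreover have "card {y. (x, y) \<in> (Q C)\<^sup>*} \<le> forest_depth C (Q C)"
        unfolding forest_depth_def using fC C(2) by (intro Max_ge) auto
      ultimately show ?thesis using assms(2) C(1) by fastforce
    qed
  qed
qed

lemma depth_ge:
  assumes "finite S" "C \<in> Cs"
  shows "Suc (forest_depth C (Q C)) \<le> forest_depth S P"
proof -
  have fC: "finite C" using C_sub[OF assms(2)] assms(1) finite_subset by blast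
  have "forest_depth C (Q C) \<in> (\<lambda>x. card {y. (x, y) \<in> (Q C)\<^sup>*}) ` C"
    unfolding forest_depth_def using fC comp_ne[OF assms(2)] by (intro Max_in) auto
  then obtain x where x: "x \<in> C" "forest_depth C (Q C) = card {y. (x, y) \<in> (Q C)\<^sup>*}" by auto
  have sub: "{y. (x, y) \<in> (Q C)\<^sup>*} \<subseteq> C" using reach_set(2)[OF assms(2) x(1)] .
  have "card {y. (x, y) \<in> P\<^sup>*} = Suc (card {y. (x, y) \<in> (Q C)\<^sup>*})"
    using reach_set(1)[OF assms(2) x(1)] sub C_sub[OF assms(2)] finite_subset[OF sub fC]
    by (subst card_insert_disjoint[symmetric]) auto
  moreover have "card {y. (x, y) \<in> P\<^sup>*} \<le> forest_depth S P"
    unfolding forest_depth_def using assms(1) x(1) C_sub[OF assms(2)] by (intro Max_ge) auto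
  ultimately show ?thesis using x by simp
qed

end


lemma elim_einv:
  assumes "elim_tree E S r P" "\<forall>x y. E x y \<longrightarrow> E y x" "\<forall>x. \<not> E x x"
  shows "einv E S r P"
  using assms(1)
proof (induction rule: elim_tree.induct)
  case (single v)
  then show ?case unfolding einv_def anc_def using assms(3) by auto
next
  case (step v S rt Q P)
  interpret stepctx E S v rt Q P
    using step assms(2) by unfold_locales auto
  show ?case using einv_P assms(3) .
qed

lemma elim_inv_step:
  assumes "elim_tree E S r P" "S \<noteq> {r}"
  shows "\<exists>rt Q. (\<forall>C \<in> components E (S - {r}). elim_tree E C (rt C) (Q C)) \<and>
     P = (\<Union>C \<in> components E (S - {r}). insert (rt C, r) (Q C))"
  using assms by (cases rule: elim_tree.cases) auto

lemma common_anc: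
  assumes "(x, y) \<in> (induced_edges E C)\<^sup>*" "x \<in> C" "single_valued P"
    and cmp: "\<forall>a\<in>C. \<forall>b\<in>C. E a b \<longrightarrow> (a, b) \<in> P\<^sup>+ \<or> (b, a) \<in> P\<^sup>+"
  shows "\<exists>a\<in>C. (x, a) \<in> P\<^sup>* \<and> (y, a) \<in> P\<^sup>*"
  using assms(1)
proof (induction rule: rtrancl_induct)
  case base then show ?case using assms(2) by auto
next
  case (step y z)
  then obtain a where a: "a \<in> C" "(x, a) \<in> P\<^sup>*" "(y, a) \<in> P\<^sup>*" by blast
  have yz: "y \<in> C" "z \<in> C" "E y z" using step(2) unfolding induced_edges_def by auto
  show ?case
  proof (cases "(z, y) \<in> P\<^sup>+")
    case True
    then have "(z, a) \<in> P\<^sup>*" using a(3) by (meson rtrancl_trans trancl_into_rtrancl)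
    then show ?thesis using a by blast
  next
    case False
    then have "(y, z) \<in> P\<^sup>*" using cmp yz by (meson trancl_into_rtrancl)
    then have "(a, z) \<in> P\<^sup>* \<or> (z, a) \<in> P\<^sup>*" using single_valued_confluent[OF assms(3) a(3)] by blast
    then show ?thesis
    proof
      assume "(a, z) \<in> P\<^sup>*"
      with a(2) have "(x, z) \<in> P\<^sup>*" by (rule rtrancl_trans)
      then show ?thesis using yz(2) by blast
    next
      assume "(z, a) \<in> P\<^sup>*"
      then show ?thesis using a by blast
    qed
  qed
qed

lemma top_ex:
  assumes "finite C" "connected_on E C" "single_valued P" "\<forall>x. (x, x) \<notin> P\<^sup>+"
    and cmp: "\<forall>a\<in>C. \<forall>b\<in>C. E a b \<longrightarrow> (a, b) \<in> P\<^sup>+ \<or> (b, a) \<in> P\<^sup>+"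
  shows "\<exists>c0\<in>C. \<forall>c\<in>C. (c, c0) \<in> P\<^sup>*"
proof -
  define R where "R = {(a, b). a \<in> C \<and> b \<in> C \<and> (b, a) \<in> P\<^sup>+}"
  have Rt: "(a, b) \<in> R\<^sup>+ \<Longrightarrow> (b, a) \<in> P\<^sup>+" for a b
  proof (induction rule: trancl_induct)
    case (base y) then show ?case by (simp add: R_def)
  next
    case (step y z)
    then have "(z, y) \<in> P\<^sup>+" by (simp add: R_def)
    then show ?case using step.IH by (rule trancl_trans)
  qed
  have "R \<subseteq> C \<times> C" unfolding R_def by auto
  moreover have "finite (C \<times> C)" using assms(1) by simp
  ultimately have "finite R" by (rule finite_subset)
  moreover have "acyclic R" unfolding acyclic_def
  proof (intro allI notI)
    fix y assume "(y, y) \<in> R\<^sup>+"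
    then have "(y, y) \<in> P\<^sup>+" by (rule Rt)
    then show False using assms(4) by blast
  qed
  ultimately have wf: "wf R" by (intro finite_acyclic_wf)
  obtain x where x: "x \<in> C" using assms(2) unfolding connected_on_def by auto
  obtain c0 where c0: "c0 \<in> C" "\<And>y. (y, c0) \<in> R \<Longrightarrow> y \<notin> C"
    using wfE_min[OF wf x] by blast
  have "\<forall>c\<in>C. (c, c0) \<in> P\<^sup>*"
  proof
    fix c assume c: "c \<in> C"
    have "(c0, c) \<in> (induced_edges E C)\<^sup>*" using assms(2) c c0(1) unfolding connected_on_def by auto
    then obtain a where a: "a \<in> C" "(c0, a) \<in> P\<^sup>*" "(c, a) \<in> P\<^sup>*"
      using common_anc[OF _ c0(1) assms(3) cmp] by blast
    have "a = c0"
    proof (rule ccontr)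
      assume "a \<noteq> c0"
      then have "(c0, a) \<in> P\<^sup>+" using a(2) by (metis rtrancl_eq_or_trancl)
      then have "(a, c0) \<in> R" using a(1) c0(1) unfolding R_def by auto
      then show False using c0(2) a(1) by blast
    qed
    then show "(c, c0) \<in> P\<^sup>*" using a by simp
  qed
  then show ?thesis using c0(1) by blast
qed

lemma choose2:
  assumes "\<forall>C\<in>A. \<exists>r Q. Pr C r Q"
  obtains rt Q where "\<forall>C\<in>A. Pr C (rt C) (Q C)"
proof -
  have "\<forall>C\<in>A. \<exists>p. Pr C (fst p) (snd p)"
  proof
    fix C assume "C \<in> A"
    then obtain r Q where "Pr C r Q" using assms by blast
    then show "\<exists>p. Pr C (fst p) (snd p)" by (intro exI[of _ "(r, Q)"]) simp
  qed
  from bchoice[OF this] obtain f where f: "\<forall>C\<in>A. Pr C (fst (f C)) (snd (f C))" ..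
  show ?thesis
  proof (rule that[of "\<lambda>C. fst (f C)" "\<lambda>C. snd (f C)"])
    show "\<forall>C\<in>A. Pr C (fst (f C)) (snd (f C))" by (rule f)
  qed
qed

lemma GL:
  assumes "finite Y" "connected_on E Y" "\<forall>x y. E x y \<longrightarrow> E y x" "\<forall>x. \<not> E x x"
    "single_valued P" "\<forall>x. (x, x) \<notin> P\<^sup>+"
    "\<forall>a\<in>Y. \<forall>b\<in>Y. E a b \<longrightarrow> (a, b) \<in> P\<^sup>+ \<or> (b, a) \<in> P\<^sup>+"
    "y0 \<in> Y" "\<forall>y\<in>Y. (y, y0) \<in> P\<^sup>*"
  shows "\<exists>Q. elim_tree E Y y0 Q \<and>
     forest_depth Y Q \<le> Max ((\<lambda>y. card {z\<in>Y. (y, z) \<in> P\<^sup>*}) ` Y)"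
  using assms
proof (induction "card Y" arbitrary: Y y0 rule: less_induct)
  case less
  define hY where "hY = Max ((\<lambda>y. card {z\<in>Y. (y, z) \<in> P\<^sup>*}) ` Y)"
  have hY_ge: "card {z\<in>Y. (y, z) \<in> P\<^sup>*} \<le> hY" if "y \<in> Y" for y
    unfolding hY_def using less.prems(1) that by (intro Max_ge) auto
  show ?case
  proof (cases "Y = {y0}")
    case True
    have "card {z\<in>Y. (y0, z) \<in> P\<^sup>*} \<ge> 1"
      proof -
      have "y0 \<in> {z\<in>Y. (y0, z) \<in> P\<^sup>*}" using less.prems(8) by auto
      then have "{z\<in>Y. (y0, z) \<in> P\<^sup>*} \<noteq> {}" by blast
      then show ?thesis using less.prems(1) by (simp add: Suc_le_eq card_gt_0_iff)
    qed
    then have "1 \<le> hY" using hY_ge[OF less.prems(8)] by simp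
    moreover have "forest_depth Y {} = 1" using True unfolding forest_depth_def by simp
    ultimately show ?thesis using True elim_tree.single[of E y0] unfolding hY_def[symmetric] by auto
  next
    case False
    let ?Cs = "components E (Y - {y0})"
    have "\<forall>C\<in>?Cs. \<exists>c0 Q. elim_tree E C c0 Q \<and> Suc (forest_depth C Q) \<le> hY"
    proof
      fix C assume C: "C \<in> ?Cs"
      have CY: "C \<subseteq> Y - {y0}" using comp_sub[OF C] .
      have fC: "finite C" by (rule finite_subset[OF CY]) (use less.prems(1) in simp)
      have cC: "connected_on E C" using comp_conn[OF less.prems(3) C] .
      have cmpC: "\<forall>a\<in>C. \<forall>b\<in>C. E a b \<longrightarrow> (a, b) \<in> P\<^sup>+ \<or> (b, a) \<in> P\<^sup>+"
        using less.prems(7) CY by blast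
      obtain c0 where c0: "c0 \<in> C" "\<forall>c\<in>C. (c, c0) \<in> P\<^sup>*"
        using top_ex[OF fC cC less.prems(5,6) cmpC] by blast
      have "card C < card Y" using CY less.prems(1,8) by (intro psubset_card_mono) auto
      then obtain Q where Q: "elim_tree E C c0 Q"
        "forest_depth C Q \<le> Max ((\<lambda>y. card {z\<in>C. (y, z) \<in> P\<^sup>*}) ` C)"
        using less.hyps[OF _ fC cC less.prems(3,4,5,6) cmpC c0(1) c0(2)] by blast
      have "Max ((\<lambda>y. card {z\<in>C. (y, z) \<in> P\<^sup>*}) ` C) < hY"
      proof (subst Max_less_iff)
        show "finite ((\<lambda>y. card {z\<in>C. (y, z) \<in> P\<^sup>*}) ` C)" using fC by simp
        show "(\<lambda>y. card {z\<in>C. (y, z) \<in> P\<^sup>*}) ` C \<noteq> {}" using c0 by auto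
        show "\<forall>a\<in>(\<lambda>y. card {z\<in>C. (y, z) \<in> P\<^sup>*}) ` C. a < hY"
        proof
          fix a assume "a \<in> (\<lambda>y. card {z\<in>C. (y, z) \<in> P\<^sup>*}) ` C"
          then obtain c where c: "c \<in> C" "a = card {z\<in>C. (c, z) \<in> P\<^sup>*}" by auto
          have "{z\<in>C. (c, z) \<in> P\<^sup>*} \<subset> {z\<in>Y. (c, z) \<in> P\<^sup>*}"
            using CY c(1) less.prems(8,9) by auto
          then have "a < card {z\<in>Y. (c, z) \<in> P\<^sup>*}"
            using c(2) less.prems(1) by (simp add: psubset_card_mono)
          then show "a < hY" using hY_ge[of c] c(1) CY by force
        qed
      qed
      then show "\<exists>c0 Q. elim_tree E C c0 Q \<and> Suc (forest_depth C Q) \<le> hY"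
        using Q by force
    qed
    then obtain rt Q where RQ: "\<forall>C\<in>?Cs. elim_tree E C (rt C) (Q C) \<and> Suc (forest_depth C (Q C)) \<le> hY"
      by (rule choose2)
    define PP where "PP = (\<Union>C \<in> ?Cs. insert (rt C, y0) (Q C))"
    have et: "elim_tree E Y y0 PP"
      using elim_tree.step[OF less.prems(8) False, where rt=rt and Q=Q and P=PP] RQ PP_def by blast
    have invs: "\<forall>C \<in> ?Cs. einv E C (rt C) (Q C)"
    proof
      fix C assume "C \<in> ?Cs"
      then have "elim_tree E C (rt C) (Q C)" using RQ by blast
      then show "einv E C (rt C) (Q C)" using elim_einv less.prems(3,4) by blast
    qed
    interpret stepctx E Y y0 rt Q PP
      using invs less.prems(3,8) PP_def by unfold_locales
    obtain x where x: "x \<in> Y - {y0}" using False less.prems(8) by blast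
    obtain C where C: "C \<in> ?Cs" using comp_ex[OF x, of E] by blast
    have "Suc (forest_depth C (Q C)) \<le> hY" using RQ C by blast
    then have h1: "hY \<ge> 1" by simp
    have "\<forall>C\<in>?Cs. forest_depth C (Q C) \<le> hY - 1"
      using RQ by fastforce
    then have "forest_depth Y PP \<le> Suc (hY - 1)"
      by (intro depth_le less.prems(1))
    then have "forest_depth Y PP \<le> hY" using h1 by simp
    then show ?thesis using et unfolding hY_def by blast
  qed
qed

lemma EX:
  assumes "finite S" "connected_on E S" "\<forall>x y. E x y \<longrightarrow> E y x"
  shows "\<exists>r P. elim_tree E S r P"
  using assms
proof (induction "card S" arbitrary: S rule: less_induct)
  case less
  obtain r where r: "r \<in> S" using less.prems(2) unfolding connected_on_def by auto
  show ?case
  proof (cases "S = {r}")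
    case True then show ?thesis using elim_tree.single by blast
  next
    case False
    let ?Cs = "components E (S - {r})"
    have "\<forall>C\<in>?Cs. \<exists>c0 Q. elim_tree E C c0 Q"
    proof
      fix C assume C: "C \<in> ?Cs"
      have CS: "C \<subseteq> S - {r}" using comp_sub[OF C] .
      have fC: "finite C" by (rule finite_subset[OF CS]) (use less.prems(1) in simp)
      have cC: "connected_on E C" using comp_conn[OF less.prems(3) C] .
      have "card C < card S" using CS less.prems(1) r by (intro psubset_card_mono) auto
      then show "\<exists>c0 Q. elim_tree E C c0 Q" using less.hyps[OF _ fC cC less.prems(3)] by blast
    qed
    then obtain rt Q where RQ: "\<forall>C\<in>?Cs. elim_tree E C (rt C) (Q C)"
      by (rule choose2)
    show ?thesis using elim_tree.step[OF r False, where rt=rt and Q=Q] RQ by blast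
  qed
qed

lemma swap_lemma:
  assumes sym: "\<forall>x y. E x y \<longrightarrow> E y x" and irr: "\<forall>x. \<not> E x x"
    and fS: "finite S" and cS: "connected_on E S" and et: "elim_tree E S r P"
    and uS: "u \<in> S" and ur: "u \<noteq> r" and nb: "\<forall>b. b \<noteq> u \<longrightarrow> E r b \<longrightarrow> E u b"
  shows "\<exists>Q. elim_tree E S u Q \<and> forest_depth S Q \<le> forest_depth S P"
proof -
  have inv: "einv E S r P" using elim_einv[OF et sym irr] .
  have rS: "r \<in> S" and Psub: "P \<subseteq> (S - {r}) \<times> S" and top: "\<forall>x\<in>S. (x, r) \<in> P\<^sup>*"
    and sv: "single_valued P" and acyc: "\<forall>x. (x, x) \<notin> P\<^sup>+"
    and cmp: "\<forall>a\<in>S. \<forall>b\<in>S. E a b \<longrightarrow> anc P a b \<or> anc P b a"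
    using inv unfolding einv_def by auto
  define \<sigma> where "\<sigma> x = (if x = r then u else if x = u then r else x)" for x
  have ss: "\<sigma> (\<sigma> x) = x" for x unfolding \<sigma>_def by auto
  have sS: "x \<in> S \<Longrightarrow> \<sigma> x \<in> S" for x unfolding \<sigma>_def using rS uS by auto
  define P' where "P' = {(a, b). (\<sigma> a, \<sigma> b) \<in> P}"
  have r1: "(\<sigma> a, \<sigma> b) \<in> P\<^sup>*" if "(a, b) \<in> P'\<^sup>*" for a b
    using that
  proof (induction rule: rtrancl_induct)
    case base then show ?case by simp
  next
    case (step y z)
    then have "(\<sigma> y, \<sigma> z) \<in> P" unfolding P'_def by simp
    with step.IH show ?case by (rule rtrancl_into_rtrancl)
  qed
  have r2: "(\<sigma> c, \<sigma> d) \<in> P'\<^sup>*" if "(c, d) \<in> P\<^sup>*" for c d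
    using that
  proof (induction rule: rtrancl_induct)
    case base then show ?case by simp
  next
    case (step y z)
    then have "(\<sigma> y, \<sigma> z) \<in> P'" unfolding P'_def using ss by simp
    with step.IH show ?case by (rule rtrancl_into_rtrancl)
  qed
  have rt_iff: "(a, b) \<in> P'\<^sup>* \<longleftrightarrow> (\<sigma> a, \<sigma> b) \<in> P\<^sup>*" for a b
    using r1 r2[of "\<sigma> a" "\<sigma> b"] ss by auto
  have t1: "(\<sigma> a, \<sigma> b) \<in> P\<^sup>+" if "(a, b) \<in> P'\<^sup>+" for a b
    using that
  proof (induction rule: trancl_induct)
    case (base y) then show ?case unfolding P'_def by auto
  next
    case (step y z)
    then have "(\<sigma> y, \<sigma> z) \<in> P" unfolding P'_def by simp
    with step.IH show ?case by (rule trancl_into_trancl)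
  qed
  have t2: "(\<sigma> c, \<sigma> d) \<in> P'\<^sup>+" if "(c, d) \<in> P\<^sup>+" for c d
    using that
  proof (induction rule: trancl_induct)
    case (base y) then show ?case unfolding P'_def using ss by auto
  next
    case (step y z)
    then have "(\<sigma> y, \<sigma> z) \<in> P'" unfolding P'_def using ss by simp
    with step.IH show ?case by (rule trancl_into_trancl)
  qed
  have tr_iff: "(a, b) \<in> P'\<^sup>+ \<longleftrightarrow> (\<sigma> a, \<sigma> b) \<in> P\<^sup>+" for a b
    using t1 t2[of "\<sigma> a" "\<sigma> b"] ss by auto
  have sv': "single_valued P'"
  proof (rule single_valuedI)
    fix x y z assume "(x, y) \<in> P'" "(x, z) \<in> P'"
    then have "\<sigma> y = \<sigma> z" using sv unfolding P'_def by (auto dest: single_valuedD)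
    then show "y = z" using ss by metis
  qed
  have acyc': "\<forall>x. (x, x) \<notin> P'\<^sup>+" using acyc tr_iff by blast
  have topP: "x \<in> S \<Longrightarrow> x \<noteq> r \<Longrightarrow> (x, r) \<in> P\<^sup>+" for x
    using top by (metis rtrancl_eq_or_trancl)
  have cmp': "\<forall>a\<in>S. \<forall>b\<in>S. E a b \<longrightarrow> (a, b) \<in> P'\<^sup>+ \<or> (b, a) \<in> P'\<^sup>+"
  proof (intro ballI impI)
    fix a b assume a: "a \<in> S" and b: "b \<in> S" and ab: "E a b"
    have ba: "E b a" using sym ab by blast
    have neq: "a \<noteq> b" using irr ab by blast
    have cP: "(x, y) \<in> P\<^sup>+ \<or> (y, x) \<in> P\<^sup>+" if "x \<in> S" "y \<in> S" "E x y" for x y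
      using cmp that unfolding anc_def by blast
    have "(\<sigma> a, \<sigma> b) \<in> P\<^sup>+ \<or> (\<sigma> b, \<sigma> a) \<in> P\<^sup>+"
    proof -
      consider "a = r" "b = u" | "a = u" "b = r" | "a = r" "b \<noteq> u" "b \<noteq> r"
        | "a = u" "b \<noteq> u" "b \<noteq> r" | "b = r" "a \<noteq> u" "a \<noteq> r" | "b = u" "a \<noteq> u" "a \<noteq> r"
        | "a \<noteq> r" "a \<noteq> u" "b \<noteq> r" "b \<noteq> u"
        using neq by blast
      then show ?thesis
      proof cases
        case 1 then show ?thesis using topP uS ur unfolding \<sigma>_def by auto
      next
        case 2 then show ?thesis using topP uS ur unfolding \<sigma>_def by auto
      next
        case 3
        then have "E u b" using nb ab by blast
        then show ?thesis using 3 cP[OF uS b] unfolding \<sigma>_def by auto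
      next
        case 4 then show ?thesis using topP b unfolding \<sigma>_def by auto
      next
        case 5
        then have "E u a" using nb ba by blast
        then show ?thesis using 5 cP[OF uS a] unfolding \<sigma>_def by auto
      next
        case 6 then show ?thesis using topP a unfolding \<sigma>_def by auto
      next
        case 7 then show ?thesis using cP[OF a b ab] unfolding \<sigma>_def by auto
      qed
    qed
    then show "(a, b) \<in> P'\<^sup>+ \<or> (b, a) \<in> P'\<^sup>+" using tr_iff by blast
  qed
  have top': "\<forall>y\<in>S. (y, u) \<in> P'\<^sup>*"
  proof
    fix y assume "y \<in> S"
    then have "(\<sigma> y, r) \<in> P\<^sup>*" using top sS by blast
    moreover have "\<sigma> u = r" unfolding \<sigma>_def using ur by auto
    ultimately show "(y, u) \<in> P'\<^sup>*" using rt_iff by simp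
  qed
  obtain Q where Q: "elim_tree E S u Q"
    "forest_depth S Q \<le> Max ((\<lambda>y. card {z\<in>S. (y, z) \<in> P'\<^sup>*}) ` S)"
    using GL[OF fS cS sym irr sv' acyc' cmp' uS top'] by blast
  have "Max ((\<lambda>y. card {z\<in>S. (y, z) \<in> P'\<^sup>*}) ` S) \<le> forest_depth S P"
  proof (subst Max_le_iff)
    show "finite ((\<lambda>y. card {z\<in>S. (y, z) \<in> P'\<^sup>*}) ` S)" using fS by simp
    show "(\<lambda>y. card {z\<in>S. (y, z) \<in> P'\<^sup>*}) ` S \<noteq> {}" using uS by blast
    show "\<forall>a\<in>(\<lambda>y. card {z\<in>S. (y, z) \<in> P'\<^sup>*}) ` S. a \<le> forest_depth S P"
    proof
      fix a assume "a \<in> (\<lambda>y. card {z\<in>S. (y, z) \<in> P'\<^sup>*}) ` S"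
      then obtain y where y: "y \<in> S" "a = card {z\<in>S. (y, z) \<in> P'\<^sup>*}" by blast
      define A where "A = {z. (\<sigma> y, z) \<in> P\<^sup>*}"
      have AS: "A \<subseteq> S" unfolding A_def using rt_in[OF _ Psub sS[OF y(1)]] by blast
      have fA: "finite A" by (rule finite_subset[OF AS fS])
      have "{z\<in>S. (y, z) \<in> P'\<^sup>*} \<subseteq> \<sigma> ` A"
      proof
        fix z assume "z \<in> {z\<in>S. (y, z) \<in> P'\<^sup>*}"
        then have "\<sigma> z \<in> A" unfolding A_def using rt_iff by simp
        then show "z \<in> \<sigma> ` A" using ss by (metis image_eqI)
      qed
      then have "a \<le> card (\<sigma> ` A)" using y(2) fA by (simp add: card_mono)
      also have "\<dots> \<le> card A" using fA by (rule card_image_le)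
      also have "\<dots> \<le> forest_depth S P"
        unfolding forest_depth_def A_def using fS sS[OF y(1)] by (intro Max_ge) auto
      finally show "a \<le> forest_depth S P" .
    qed
  qed
  then show ?thesis using Q by (meson order_trans)
qed

lemma card_nbhd:
  assumes "finite V" "w \<in> V"
  shows "card (nbhd V E u) = card (nbhd V E u - {w}) + (if E u w then 1 else 0)"
proof -
  have f: "finite (nbhd V E u)" using assms(1) unfolding nbhd_def by simp
  have "w \<in> nbhd V E u \<longleftrightarrow> E u w" using assms(2) unfolding nbhd_def by simp
  show ?thesis
  proof (cases "E u w")
    case True
    then have wi: "w \<in> nbhd V E u" using \<open>w \<in> nbhd V E u \<longleftrightarrow> E u w\<close> by simp
    then have "card (nbhd V E u) > 0" using f card_gt_0_iff by blast
    then show ?thesis using True wi f by (simp add: card_Diff_singleton)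
  next
    case False
    then show ?thesis using \<open>w \<in> nbhd V E u \<longleftrightarrow> E u w\<close> by simp
  qed
qed

lemma dom_key:
  assumes sg: "simple_graph V E" and "u \<in> V" "w \<in> V" and d: "dominates V E u w"
  shows "card (nbhd V E w) < card (nbhd V E u) \<or>
         (card (nbhd V E w) = card (nbhd V E u) \<and> w < u)"
proof -
  have fV: "finite V" and sym: "\<forall>x y. E x y \<longrightarrow> E y x" using sg unfolding simple_graph_def by auto
  have cu: "card (nbhd V E u) = card (nbhd V E u - {w}) + (if E u w then 1 else 0)"
    using card_nbhd[OF fV assms(3)] .
  have cw: "card (nbhd V E w) = card (nbhd V E w - {u}) + (if E u w then 1 else 0)"
  proof -
    have "E w u = E u w" using sym by blast
    then show ?thesis using card_nbhd[OF fV assms(2), of E w] by simp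
  qed
  have fA: "finite (nbhd V E u - {w})" using fV unfolding nbhd_def by simp
  have "nbhd V E w - {u} \<subset> nbhd V E u - {w} \<or> (nbhd V E u - {w} = nbhd V E w - {u} \<and> w < u)"
    using d unfolding dominates_def by (rule conjunct2)
  then show ?thesis
  proof
    assume "nbhd V E w - {u} \<subset> nbhd V E u - {w}"
    with fA have "card (nbhd V E w - {u}) < card (nbhd V E u - {w})" by (rule psubset_card_mono)
    then show ?thesis using cu cw by simp
  next
    assume "nbhd V E u - {w} = nbhd V E w - {u} \<and> w < u"
    then show ?thesis using cu cw by simp
  qed
qed

lemma dom_nb:
  assumes sg: "simple_graph V E" and d: "dominates V E u w"
  shows "\<forall>b. b \<noteq> u \<longrightarrow> E w b \<longrightarrow> E u b"
proof (intro allI impI)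
  fix b assume "b \<noteq> u" "E w b"
  then have "b \<in> nbhd V E w - {u}" using sg unfolding simple_graph_def nbhd_def by auto
  moreover have "nbhd V E w - {u} \<subseteq> nbhd V E u - {w}"
  proof -
    have "nbhd V E w - {u} \<subset> nbhd V E u - {w} \<or> (nbhd V E u - {w} = nbhd V E w - {u} \<and> w < u)"
      using d unfolding dominates_def by (rule conjunct2)
    then show ?thesis
    proof
      assume "nbhd V E w - {u} \<subset> nbhd V E u - {w}"
      then show ?thesis by (rule psubset_imp_subset)
    next
      assume "nbhd V E u - {w} = nbhd V E w - {u} \<and> w < u"
      then show ?thesis by simp
    qed
  qed
  ultimately have "b \<in> nbhd V E u - {w}" by blast
  then show "E u b" unfolding nbhd_def by auto
qed

lemma einv_td:
  assumes sg: "simple_graph V E" and inv: "einv E V r P"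
  shows "td_decomposition V E P"
proof -
  have e: "\<forall>x y. E x y \<longrightarrow> x \<in> V \<and> y \<in> V" using sg unfolding simple_graph_def by blast
  have i: "P \<subseteq> (V - {r}) \<times> V" "single_valued P" "\<forall>x. (x, x) \<notin> P\<^sup>+"
    "\<forall>a\<in>V. \<forall>b\<in>V. E a b \<longrightarrow> anc P a b \<or> anc P b a"
    using inv unfolding einv_def by auto
  have "P \<subseteq> V \<times> V" using i(1) by blast
  then have "rooted_forest V P" unfolding rooted_forest_def using i(2,3) by blast
  moreover have "\<forall>u v. E u v \<longrightarrow> anc P u v \<or> anc P v u"
  proof (intro allI impI)
    fix u v assume "E u v"
    then show "anc P u v \<or> anc P v u" using e i(4) by blast
  qed
  ultimately show ?thesis unfolding td_decomposition_def by blast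
qed

lemma M:
  assumes sg: "simple_graph V E"
  shows "S \<subseteq> V \<Longrightarrow> connected_on E S \<Longrightarrow> (\<exists>r P. elim_tree E S r P \<and> forest_depth S P \<le> k) \<Longrightarrow>
    (\<exists>r P. elim_tree E S r P \<and> forest_depth S P \<le> k \<and>
       (\<forall>w\<in>S. \<forall>u\<in>S. dominates V E u w \<longrightarrow> \<not> anc P w u))"
proof (induction "card S" arbitrary: S k rule: less_induct)
  case less
  have fV: "finite V" and sym: "\<forall>x y. E x y \<longrightarrow> E y x" and irr: "\<forall>x. \<not> E x x"
    using sg unfolding simple_graph_def by auto
  have fS: "finite S" using less.prems(1) fV finite_subset by blast
  define R where "R = {r \<in> S. \<exists>P. elim_tree E S r P \<and> forest_depth S P \<le> k}"
  obtain r1 P1 where rp1: "elim_tree E S r1 P1" "forest_depth S P1 \<le> k" using less.prems(3) by blast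
  have "einv E S r1 P1" using elim_einv[OF rp1(1) sym irr] .
  then have "r1 \<in> S" unfolding einv_def by blast
  then have "r1 \<in> R" unfolding R_def using rp1 by blast
  then have Rne: "R \<noteq> {}" by blast
  have fR: "finite R" using fS unfolding R_def by simp
  define deg where "deg x = card (nbhd V E x)" for x
  define d where "d = Max (deg ` R)"
  define R' where "R' = {x \<in> R. deg x = d}"
  have fR': "finite R'" using fR unfolding R'_def by simp
  have "d \<in> deg ` R" unfolding d_def using fR Rne by (intro Max_in) auto
  then have R'ne: "R' \<noteq> {}" unfolding R'_def by auto
  define r where "r = Max R'"
  have rR': "r \<in> R'" unfolding r_def using fR' R'ne by (intro Max_in)
  have rR: "r \<in> R" and degr: "deg r = d" using rR' unfolding R'_def by auto
  have maxr: "\<not> (deg r < deg x \<or> (deg r = deg x \<and> r < x))" if "x \<in> R" for x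
  proof -
    have "deg x \<le> d" unfolding d_def using fR that by (intro Max_ge) auto
    moreover have "deg x = d \<Longrightarrow> x \<le> r" unfolding r_def using fR' that unfolding R'_def by (intro Max_ge) auto
    ultimately show ?thesis using degr by auto
  qed
  obtain P0 where P0: "elim_tree E S r P0" "forest_depth S P0 \<le> k" using rR unfolding R_def by blast
  have rS: "r \<in> S" using rR unfolding R_def by auto
  have inv0: "einv E S r P0" using elim_einv[OF P0(1) sym irr] .
  show ?case
  proof (cases "S = {r}")
    case True
    have "P0 = {}" using inv0 True unfolding einv_def by auto
    then show ?thesis using P0 True by (intro exI[of _ r] exI[of _ "{}"]) (simp add: anc_def)
  next
    case False
    let ?Cs = "components E (S - {r})"
    obtain rt Q where RQ: "\<forall>C \<in> ?Cs. elim_tree E C (rt C) (Q C)"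
      and P0_def: "P0 = (\<Union>C \<in> ?Cs. insert (rt C, r) (Q C))"
      using elim_inv_step[OF P0(1) False] by blast
    have invs: "\<forall>C \<in> ?Cs. einv E C (rt C) (Q C)"
    proof
      fix C assume "C \<in> ?Cs"
      then have "elim_tree E C (rt C) (Q C)" using RQ by blast
      then show "einv E C (rt C) (Q C)" using elim_einv sym irr by blast
    qed
    interpret s1: stepctx E S r rt Q P0
      using invs sym rS P0_def by unfold_locales
    have "\<forall>C\<in>?Cs. \<exists>c0 Q'. elim_tree E C c0 Q' \<and> Suc (forest_depth C Q') \<le> k \<and>
       (\<forall>w\<in>C. \<forall>u\<in>C. dominates V E u w \<longrightarrow> \<not> anc Q' w u)"
    proof
      fix C assume C: "C \<in> ?Cs"
      have CS: "C \<subseteq> S - {r}" using comp_sub[OF C] .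
      have CV: "C \<subseteq> V" using CS less.prems(1) by blast
      have cC: "connected_on E C" using comp_conn[OF sym C] .
      have lt: "card C < card S" using CS fS rS by (intro psubset_card_mono) auto
      have "Suc (forest_depth C (Q C)) \<le> k" using s1.depth_ge[OF fS C] P0(2) by simp
      moreover have "elim_tree E C (rt C) (Q C)" using RQ C by blast
      ultimately have "\<exists>r P. elim_tree E C r P \<and> forest_depth C P \<le> k - 1" by (intro exI[of _ "rt C"] exI[of _ "Q C"]) simp
      then obtain c0 Q' where "elim_tree E C c0 Q'" "forest_depth C Q' \<le> k - 1"
        "\<forall>w\<in>C. \<forall>u\<in>C. dominates V E u w \<longrightarrow> \<not> anc Q' w u"
        using less.hyps[OF lt CV cC] by blast
      moreover have "k \<ge> 1" using \<open>Suc (forest_depth C (Q C)) \<le> k\<close> by simp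
      ultimately show "\<exists>c0 Q'. elim_tree E C c0 Q' \<and> Suc (forest_depth C Q') \<le> k \<and>
       (\<forall>w\<in>C. \<forall>u\<in>C. dominates V E u w \<longrightarrow> \<not> anc Q' w u)"
        by (intro exI[of _ c0] exI[of _ Q']) simp
    qed
    then obtain rt' Q' where RQ': "\<forall>C\<in>?Cs. elim_tree E C (rt' C) (Q' C) \<and> Suc (forest_depth C (Q' C)) \<le> k \<and>
       (\<forall>w\<in>C. \<forall>u\<in>C. dominates V E u w \<longrightarrow> \<not> anc (Q' C) w u)"
      by (rule choose2)
    define P' where "P' = (\<Union>C \<in> ?Cs. insert (rt' C, r) (Q' C))"
    have et: "elim_tree E S r P'"
      using elim_tree.step[OF rS False, where rt=rt' and Q=Q' and P=P'] RQ' P'_def by blast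
    have invs': "\<forall>C \<in> ?Cs. einv E C (rt' C) (Q' C)"
    proof
      fix C assume "C \<in> ?Cs"
      then have "elim_tree E C (rt' C) (Q' C)" using RQ' by blast
      then show "einv E C (rt' C) (Q' C)" using elim_einv sym irr by blast
    qed
    interpret s2: stepctx E S r rt' Q' P'
      using invs' sym rS P'_def by unfold_locales
    obtain x where x: "x \<in> S - {r}" using False rS by blast
    obtain C0 where C0: "C0 \<in> ?Cs" using comp_ex[OF x, of E] by blast
    have k1: "k \<ge> 1" using RQ' C0 by fastforce
    have "\<forall>C\<in>?Cs. forest_depth C (Q' C) \<le> k - 1" using RQ' by fastforce
    then have "forest_depth S P' \<le> Suc (k - 1)" by (intro s2.depth_le fS)
    then have dP': "forest_depth S P' \<le> k" using k1 by simp
    have propP: "\<forall>w\<in>S. \<forall>u\<in>S. dominates V E u w \<longrightarrow> \<not> anc P' w u"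
    proof (intro ballI impI notI)
      fix w u assume w: "w \<in> S" and u: "u \<in> S" and d: "dominates V E u w" and a: "anc P' w u"
      have uw: "u \<noteq> w" using d unfolding dominates_def by auto
      have uwP: "(u, w) \<in> P'\<^sup>+" using a unfolding anc_def .
      show False
      proof (cases "w = r")
        case True
        have nb: "\<forall>b. b \<noteq> u \<longrightarrow> E r b \<longrightarrow> E u b" using dom_nb[OF sg d] True by simp
        obtain Qu where "elim_tree E S u Qu" "forest_depth S Qu \<le> forest_depth S P'"
          using swap_lemma[OF sym irr fS less.prems(2) et u _ nb] uw True by blast
        then have "u \<in> R" unfolding R_def using u dP' by auto
        moreover have "deg r < deg u \<or> (deg r = deg u \<and> r < u)"
          using dom_key[OF sg _ _ d] u w less.prems(1) True unfolding deg_def by blast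
        ultimately show False using maxr by blast
      next
        case False
        obtain z where uz: "(u, z) \<in> P'" and zw: "(z, w) \<in> P'\<^sup>*" using uwP by (meson tranclD)
        have ur: "u \<noteq> r" using uz s2.v_nosucc by blast
        obtain C where C: "C \<in> ?Cs" "u \<in> C" using comp_ex[of u "S - {r}" E] u ur by blast
        have "(u, w) \<in> P'\<^sup>*" using uwP by (rule trancl_into_rtrancl)
        then have "(u, w) \<in> (Q' C)\<^sup>*" using s2.reach[OF C] False by blast
        then have "(u, w) \<in> (Q' C)\<^sup>+" "w \<in> C" using uw s2.reach_set(2)[OF C]
          by (auto simp: rtrancl_eq_or_trancl)
        then show False using RQ' C d unfolding anc_def by blast
      qed
    qed
    show ?thesis using et dP' propP by blast
  qed
qed

theorem mainTheorem1:
  fixes V :: "int set" and E :: "int \<Rightarrow> int \<Rightarrow> bool"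
  assumes "simple_graph V E"
    and "connected_on E V"
  shows "\<exists>r P. elim_tree E V r P \<and> forest_depth V P = treedepth V E \<and>
           (\<forall>w\<in>V. \<forall>v\<in>V. dominates V E v w \<longrightarrow> \<not> anc P w v)"
proof -
  note sg = assms(1)
  have fV: "finite V" and sym: "\<forall>x y. E x y \<longrightarrow> E y x" and irr: "\<forall>x. \<not> E x x"
    and eV: "\<forall>x y. E x y \<longrightarrow> x \<in> V \<and> y \<in> V"
    using sg unfolding simple_graph_def by auto
  obtain r0 P0 where et0: "elim_tree E V r0 P0" using EX[OF fV assms(2) sym] by blast
  have "td_decomposition V E P0" using einv_td[OF sg elim_einv[OF et0 sym irr]] .
  then have ex: "\<exists>P. td_decomposition V E P \<and> forest_depth V P = forest_depth V P0" by blast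
  define T where "T = treedepth V E"
  have "\<exists>P. td_decomposition V E P \<and> forest_depth V P = T"
    unfolding T_def treedepth_def
    by (rule LeastI_ex[of "\<lambda>k. \<exists>P. td_decomposition V E P \<and> forest_depth V P = k"]) (use ex in blast)
  then obtain P1 where P1: "td_decomposition V E P1" "forest_depth V P1 = T" by blast
  have P1f: "P1 \<subseteq> V \<times> V" "single_valued P1" "\<forall>x. (x, x) \<notin> P1\<^sup>+"
    and P1e: "\<forall>u v. E u v \<longrightarrow> anc P1 u v \<or> anc P1 v u"
    using P1(1) unfolding td_decomposition_def rooted_forest_def by auto
  have cmp: "\<forall>a\<in>V. \<forall>b\<in>V. E a b \<longrightarrow> (a, b) \<in> P1\<^sup>+ \<or> (b, a) \<in> P1\<^sup>+"
    using P1e unfolding anc_def by blast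
  obtain y0 where y0: "y0 \<in> V" "\<forall>c\<in>V. (c, y0) \<in> P1\<^sup>*"
    using top_ex[OF fV assms(2) P1f(2,3) cmp] by blast
  obtain Q where Q: "elim_tree E V y0 Q"
    "forest_depth V Q \<le> Max ((\<lambda>y. card {z\<in>V. (y, z) \<in> P1\<^sup>*}) ` V)"
    using GL[OF fV assms(2) sym irr P1f(2,3) cmp y0] by blast
  have "Max ((\<lambda>y. card {z\<in>V. (y, z) \<in> P1\<^sup>*}) ` V) \<le> forest_depth V P1"
  proof (subst Max_le_iff)
    show "finite ((\<lambda>y. card {z\<in>V. (y, z) \<in> P1\<^sup>*}) ` V)" using fV by simp
    show "(\<lambda>y. card {z\<in>V. (y, z) \<in> P1\<^sup>*}) ` V \<noteq> {}" using y0 by blast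
    show "\<forall>a\<in>(\<lambda>y. card {z\<in>V. (y, z) \<in> P1\<^sup>*}) ` V. a \<le> forest_depth V P1"
    proof
      fix a assume "a \<in> (\<lambda>y. card {z\<in>V. (y, z) \<in> P1\<^sup>*}) ` V"
      then obtain y where y: "y \<in> V" "a = card {z\<in>V. (y, z) \<in> P1\<^sup>*}" by blast
      have sub: "{z. (y, z) \<in> P1\<^sup>*} \<subseteq> V" using rt_in[OF _ P1f(1) y(1)] by blast
      have fin: "finite {z. (y, z) \<in> P1\<^sup>*}" by (rule finite_subset[OF sub fV])
      have "{z\<in>V. (y, z) \<in> P1\<^sup>*} \<subseteq> {z. (y, z) \<in> P1\<^sup>*}" by blast
      with fin have "card {z\<in>V. (y, z) \<in> P1\<^sup>*} \<le> card {z. (y, z) \<in> P1\<^sup>*}" by (rule card_mono)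
      then have "a \<le> card {z. (y, z) \<in> P1\<^sup>*}" using y(2) by simp
      also have "\<dots> \<le> forest_depth V P1"
        unfolding forest_depth_def using fV y(1) by (intro Max_ge) auto
      finally show "a \<le> forest_depth V P1" .
    qed
  qed
  then have "forest_depth V Q \<le> T" using Q(2) P1(2) by simp
  then obtain r P where rP: "elim_tree E V r P" "forest_depth V P \<le> T"
    "\<forall>w\<in>V. \<forall>u\<in>V. dominates V E u w \<longrightarrow> \<not> anc P w u"
    using M[OF sg subset_refl assms(2)] Q(1) by blast
  have "td_decomposition V E P" using einv_td[OF sg elim_einv[OF rP(1) sym irr]] .
  then have "T \<le> forest_depth V P" unfolding T_def treedepth_def
    by (intro Least_le) blast
  then have "forest_depth V P = treedepth V E" using rP(2) T_def by simp
  then show ?thesis using rP(1,3) by blast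
qed

end
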